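(* Let $n\ge 1$ and $k\ge 2$ be integers. Let $\overrightarrow{K_n}$ be the complete directed graph on $n$ vertices with a loop at each vertex and, for each pair of distinct vertices $i,j$, both directed edges $ij$ and $ji$. For any $1$-factorization of $\overrightarrow{K_n}$ there is a rainbow subgraph with maximum indegree and maximum outdegree at most one, having at least $n-6n^{\frac{k-1}{k}}$ edges, which contains no directed cycle $\overrightarrow{C_l}$ with $l\le k$.
   Context: A $1$-factorization of $\overrightarrow{K_n}$ is a coloring of its edges (loops included) such that each color class is a $1$-regular digraph, i.e. every vertex has exactly one outgoing and exactly one incoming edge of that color (a loop counts as one of each). A subgraph is rainbow if its edges have pairwise distinct colors. A directed cycle $\overrightarrow{C_l}$ of length $l$ is a sequence of $l$ distinct vertices $v_1,\dots,v_l$ with edges $v_1v_2,\dots,v_{l-1}v_l,v_lv_1$; a loop is a directed cycle of length $1$. *)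

theory Defs
  imports Complex_Main
begin

definition Kn_edges :: "nat \<Rightarrow> (nat \<times> nat) set" where
  "Kn_edges n = {0..<n} \<times> {0..<n}"

definition one_factorization :: "nat \<Rightarrow> (nat \<times> nat \<Rightarrow> 'c) \<Rightarrow> bool" where
  "one_factorization n col \<longleftrightarrow>
     (\<forall>x \<in> col ` Kn_edges n. \<forall>v<n.
        (\<exists>!u. u < n \<and> col (v, u) = x) \<and> (\<exists>!u. u < n \<and> col (u, v) = x))"

definition rainbow :: "(nat \<times> nat \<Rightarrow> 'c) \<Rightarrow> (nat \<times> nat) set \<Rightarrow> bool" where
  "rainbow col H \<longleftrightarrow> inj_on col H"

definition max_in_out_deg_le_one :: "(nat \<times> nat) set \<Rightarrow> bool" where
  "max_in_out_deg_le_one H \<longleftrightarrow>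
     (\<forall>v. card {u. (v, u) \<in> H} \<le> 1 \<and> card {u. (u, v) \<in> H} \<le> 1)"

text \<open>A directed cycle of length l in H: l distinct vertices v_0..v_{l-1} with the
edges v_i v_{i+1} (indices mod l) in H; l = 1 is a loop.\<close>

definition has_dicycle :: "(nat \<times> nat) set \<Rightarrow> nat \<Rightarrow> bool" where
  "has_dicycle H l \<longleftrightarrow>
     (\<exists>vs. length vs = l \<and> l \<ge> 1 \<and> distinct vs \<and>
        (\<forall>i<l. (vs ! i, vs ! ((i + 1) mod l)) \<in> H))"

end

theory Submission
  imports Defs
begin

definition func :: "(nat \<times> nat) set \<Rightarrow> bool" where
  "func T \<longleftrightarrow> (\<forall>a b c. (a,b) \<in> T \<longrightarrow> (a,c) \<in> T \<longrightarrow> b = c) \<and>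
                (\<forall>a b c. (a,c) \<in> T \<longrightarrow> (b,c) \<in> T \<longrightarrow> a = b)"

definition nocyc :: "nat \<Rightarrow> (nat \<times> nat) set \<Rightarrow> bool" where
  "nocyc k T \<longleftrightarrow> (\<forall>l. 1 \<le> l \<and> l \<le> k \<longrightarrow> \<not> has_dicycle T l)"

definition valid :: "nat \<Rightarrow> nat \<Rightarrow> (nat \<times> nat \<Rightarrow> 'c) \<Rightarrow> (nat \<times> nat) set \<Rightarrow> bool" where
  "valid n k col T \<longleftrightarrow> T \<subseteq> Kn_edges n \<and> inj_on col T \<and> func T \<and> nocyc k T"

fun reach :: "(nat \<times> nat) set \<Rightarrow> nat \<Rightarrow> nat \<Rightarrow> nat set" where
  "reach T 0 a = {a}"
| "reach T (Suc j) a = {c. \<exists>b \<in> reach T j a. (b,c) \<in> T}"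

lemma reach_single: "func T \<Longrightarrow> \<exists>w. reach T j a \<subseteq> {w}"
proof (induction j)
  case 0 show ?case by auto
next
  case (Suc j)
  then obtain w where w: "reach T j a \<subseteq> {w}" by blast
  show ?case
  proof (cases "\<exists>c. (w,c) \<in> T")
    case True
    then obtain c where c: "(w,c) \<in> T" by blast
    have "reach T (Suc j) a \<subseteq> {c}" using w c Suc.prems unfolding func_def by auto
    then show ?thesis by blast
  next
    case False
    have "reach T (Suc j) a = {}" using w False by auto
    then show ?thesis by blast
  qed
qed

lemma reach_card:
  assumes f: "func T"
  shows "card (\<Union>j<k. reach T j a) \<le> k \<and> finite (\<Union>j<k. reach T j a)"
proof -
  have fin: "finite (reach T j a)" for j
    using reach_single[OF f, of j a] by (meson finite.emptyI finite_insert finite_subset)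
  have c1: "card (reach T j a) \<le> 1" for j
  proof -
    obtain w where "reach T j a \<subseteq> {w}" using reach_single[OF f] by blast
    then show ?thesis using card_mono[of "{w}" "reach T j a"] by auto
  qed
  have "card (\<Union>j<k. reach T j a) \<le> (\<Sum>j<k. card (reach T j a))" by (rule card_UN_le) simp
  also have "\<dots> \<le> (\<Sum>j<k. 1)" by (rule sum_mono) (rule c1)
  finally show ?thesis using fin by auto
qed

lemma mod_ne:
  fixes i0 j l :: nat
  assumes "i0 < l" "Suc j < l"
  shows "(i0 + 1 + j) mod l \<noteq> i0"
proof (cases "i0 + 1 + j < l")
  case True then show ?thesis by simp
next
  case False
  then have "(i0 + 1 + j) mod l = i0 + 1 + j - l"
    using assms by (simp add: le_mod_geq)
  then show ?thesis using assms False by simp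
qed

lemma cycle_reach:
  assumes nc: "nocyc k T" and G: "G \<subseteq> insert (y,u) T" and cyc: "has_dicycle G l"
    and l1: "1 \<le> l" and lk: "l \<le> k"
  shows "\<exists>j<l. y \<in> reach T j u"
proof -
  obtain vs where len: "length vs = l" and dist: "distinct vs"
    and ed: "\<forall>i<l. (vs!i, vs!((i+1) mod l)) \<in> G"
    using cyc unfolding has_dicycle_def by blast
  have "\<exists>i0<l. vs!i0 = y \<and> vs!((i0+1) mod l) = u"
  proof (rule ccontr)
    assume "\<not> ?thesis"
    then have "\<forall>i<l. (vs!i, vs!((i+1) mod l)) \<in> T" using ed G by blast
    then have "has_dicycle T l" unfolding has_dicycle_def using len dist l1 by blast
    then show False using nc l1 lk unfolding nocyc_def by blast
  qed
  then obtain i0 where i0: "i0 < l" "vs!i0 = y" "vs!((i0+1) mod l) = u" by blast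
  have other: "(vs!i, vs!((i+1) mod l)) \<in> T" if "i < l" "i \<noteq> i0" for i
  proof -
    have "vs!i \<noteq> vs!i0" using dist len that i0(1) nth_eq_iff_index_eq by metis
    then show ?thesis using ed G that i0(2) by auto
  qed
  have step: "j < l \<Longrightarrow> vs!((i0+1+j) mod l) \<in> reach T j u" for j
  proof (induction j)
    case 0 then show ?case using i0 by simp
  next
    case (Suc j)
    then have IH: "vs!((i0+1+j) mod l) \<in> reach T j u" by simp
    let ?i = "(i0+1+j) mod l"
    have il: "?i < l" using l1 by simp
    have ne: "?i \<noteq> i0" using mod_ne[OF i0(1) Suc.prems] .
    have e: "(vs!?i, vs!((?i+1) mod l)) \<in> T" using other[OF il ne] .
    have "(?i+1) mod l = (i0+1+Suc j) mod l" by (simp add: mod_Suc_eq)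
    then show ?case using IH e by auto
  qed
  have "l - 1 < l" using l1 by simp
  moreover have "(i0+1+(l-1)) mod l = i0" using l1 i0(1) by simp
  ultimately have "y \<in> reach T (l-1) u" using step[of "l-1"] i0(2) by simp
  then show ?thesis using \<open>l - 1 < l\<close> by blast
qed

lemma func_subset: "func T \<Longrightarrow> T' \<subseteq> T \<Longrightarrow> func T'"
  unfolding func_def by (meson subsetD)

lemma func_insert:
  assumes "func T0" "\<forall>v. (v,u) \<notin> T0" "\<forall>w. (y,w) \<notin> T0"
  shows "func (insert (y,u) T0)"
  unfolding func_def
proof (intro conjI allI impI)
  fix a b c assume "(a,b) \<in> insert (y,u) T0" "(a,c) \<in> insert (y,u) T0"
  then show "b = c" using assms unfolding func_def by auto
next
  fix a b c assume "(a,c) \<in> insert (y,u) T0" "(b,c) \<in> insert (y,u) T0"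
  then show "a = b" using assms unfolding func_def by auto
qed

lemma func_maxdeg:
  assumes "finite T" "func T"
  shows "max_in_out_deg_le_one T"
  unfolding max_in_out_deg_le_one_def
proof (intro allI conjI)
  fix v
  have s1: "{u. (v,u) \<in> T} \<subseteq> snd ` T"
  proof
    fix u assume "u \<in> {u. (v,u) \<in> T}"
    then have "(v,u) \<in> T" by simp
    then show "u \<in> snd ` T" by (rule rev_image_eqI) simp
  qed
  have f1: "finite {u. (v,u) \<in> T}" using finite_subset[OF s1] assms(1) by blast
  show "card {u. (v,u) \<in> T} \<le> 1"
    using card_le_Suc0_iff_eq[OF f1] assms(2) unfolding func_def by auto
  have s2: "{u. (u,v) \<in> T} \<subseteq> fst ` T"
  proof
    fix u assume "u \<in> {u. (u,v) \<in> T}"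
    then have "(u,v) \<in> T" by simp
    then show "u \<in> fst ` T" by (rule rev_image_eqI) simp
  qed
  have f2: "finite {u. (u,v) \<in> T}" using finite_subset[OF s2] assms(1) by blast
  show "card {u. (u,v) \<in> T} \<le> 1"
    using card_le_Suc0_iff_eq[OF f2] assms(2) unfolding func_def by auto
qed

locale ctx =
  fixes n k :: nat and col :: "nat \<times> nat \<Rightarrow> 'c" and H :: "(nat \<times> nat) set"
  assumes fac: "one_factorization n col" and n1: "1 \<le> n" and k1: "1 \<le> k"
    and Hv: "valid n k col H" and Hmax: "\<And>T. valid n k col T \<Longrightarrow> card T \<le> card H"
begin

definition "Iset = {u. u < n \<and> (\<forall>v. (v,u) \<notin> H)}"
definition "Dset = {y. \<exists>z. (y,z) \<in> H}"
definition "fH y = (THE z. (y,z) \<in> H)"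
definition "Cols = col ` Kn_edges n"
definition "Mset = Cols - col ` H"

lemma Kn_fin: "finite (Kn_edges n)" unfolding Kn_edges_def by simp

lemma H_sub: "H \<subseteq> Kn_edges n" using Hv unfolding valid_def by simp
lemma H_fin: "finite H" using H_sub Kn_fin finite_subset by blast
lemma H_func: "func H" using Hv unfolding valid_def by simp

lemma fH: "(y,z) \<in> H \<Longrightarrow> fH y = z"
  unfolding fH_def using H_func unfolding func_def by blast

lemma fH_D: "y \<in> Dset \<Longrightarrow> (y, fH y) \<in> H"
  unfolding Dset_def using fH by blast

inductive cert :: "'c set \<Rightarrow> (nat \<times> nat) set \<Rightarrow> nat \<Rightarrow> bool" for S :: "'c set" where
  base: "u \<in> Iset \<Longrightarrow> cert S H u"
| step: "cert S T u \<Longrightarrow> (y,z) \<in> T \<Longrightarrow> (y,z) \<in> H \<Longrightarrow> col (y,u) \<in> S \<Longrightarrow> col (y,u) \<notin> col ` T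
    \<Longrightarrow> nocyc k (insert (y,u) (T - {(y,z)})) \<Longrightarrow> cert S (insert (y,u) (T - {(y,z)})) z"

lemma cert_mono: "cert S T u \<Longrightarrow> S \<subseteq> S' \<Longrightarrow> cert S' T u"
proof (induction rule: cert.induct)
  case (base u) then show ?case by (simp add: cert.base)
next
  case (step T u y z) then show ?case by (intro cert.step) auto
qed

lemma cert_inv:
  "cert S T u \<Longrightarrow> valid n k col T \<and> card T = card H \<and> u < n \<and> (\<forall>v. (v,u) \<notin> T)
    \<and> (\<forall>y. (\<exists>w. (y,w) \<in> T) \<longleftrightarrow> (\<exists>w. (y,w) \<in> H)) \<and> col ` T \<subseteq> col ` H \<union> S
    \<and> (\<forall>y w. (y,w) \<in> T \<longrightarrow> (y,w) \<notin> H \<longrightarrow> (\<exists>T'. cert S T' (fH y)))"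
proof (induction rule: cert.induct)
  case (base u) then show ?case using Hv unfolding Iset_def by auto
next
  case (step T u y z)
  let ?T' = "insert (y,u) (T - {(y,z)})"
  have vT: "valid n k col T" and cT: "card T = card H" and un: "u < n" and uf: "\<forall>v. (v,u) \<notin> T"
    and od: "\<forall>y. (\<exists>w. (y,w) \<in> T) \<longleftrightarrow> (\<exists>w. (y,w) \<in> H)" and cs: "col ` T \<subseteq> col ` H \<union> S"
    and lst: "\<forall>y w. (y,w) \<in> T \<longrightarrow> (y,w) \<notin> H \<longrightarrow> (\<exists>T'. cert S T' (fH y))"
    using step.IH by blast+
  have Tsub: "T \<subseteq> Kn_edges n" and Tinj: "inj_on col T" and Tf: "func T"
    using vT unfolding valid_def by auto
  have yz: "(y,z) \<in> T" by (rule step.hyps(2))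
  have yn: "y < n" and zn: "z < n" using Tsub yz unfolding Kn_edges_def by auto
  have Tfin: "finite T" using Tsub Kn_fin finite_subset by blast
  have T0f: "func (T - {(y,z)})" using func_subset[OF Tf] by blast
  have y0: "\<forall>w. (y,w) \<notin> T - {(y,z)}" using Tf yz unfolding func_def by blast
  have u0: "\<forall>v. (v,u) \<notin> T - {(y,z)}" using uf by blast
  have v1: "?T' \<subseteq> Kn_edges n" using Tsub yn un unfolding Kn_edges_def by auto
  have v2: "inj_on col ?T'"
  proof -
    have "inj_on col (T - {(y,z)})" using Tinj inj_on_subset by blast
    moreover have "col (y,u) \<notin> col ` (T - {(y,z)})" using step.hyps(5) by blast
    ultimately show ?thesis by (auto simp: inj_on_insert)
  qed
  have v3: "func ?T'" using func_insert[OF T0f u0 y0] .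
  have valid': "valid n k col ?T'" unfolding valid_def using v1 v2 v3 step.hyps(6) by blast
  have "(y,u) \<notin> T - {(y,z)}" using uf by blast
  moreover have "card T > 0" using Tfin yz card_gt_0_iff by blast
  ultimately have card': "card ?T' = card H" using cT Tfin yz by (simp add: card_Diff_singleton)
  have zf: "\<forall>v. (v,z) \<notin> ?T'"
  proof (intro allI notI)
    fix v assume "(v,z) \<in> ?T'"
    then consider "(v,z) = (y,u)" | "(v,z) \<in> T - {(y,z)}" by blast
    then show False
    proof cases
      case 1 then have "z = u" by simp
      then show False using uf yz by blast
    next
      case 2 then have "v = y" using Tf yz unfolding func_def by blast
      then show False using 2 by blast
    qed
  qed
  have od': "\<forall>a. (\<exists>w. (a,w) \<in> ?T') \<longleftrightarrow> (\<exists>w. (a,w) \<in> H)"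
  proof
    fix a show "(\<exists>w. (a,w) \<in> ?T') \<longleftrightarrow> (\<exists>w. (a,w) \<in> H)"
    proof (cases "a = y")
      case True then show ?thesis using od yz by blast
    next
      case False
      then have "(\<exists>w. (a,w) \<in> ?T') \<longleftrightarrow> (\<exists>w. (a,w) \<in> T)" by blast
      then show ?thesis using od by blast
    qed
  qed
  have cs': "col ` ?T' \<subseteq> col ` H \<union> S" using cs step.hyps(4) by blast
  have certz: "cert S ?T' z" using cert.step[OF step.hyps(1-6)] .
  have lst': "\<forall>a w. (a,w) \<in> ?T' \<longrightarrow> (a,w) \<notin> H \<longrightarrow> (\<exists>T'. cert S T' (fH a))"
  proof (intro allI impI)
    fix a w assume aw: "(a,w) \<in> ?T'" "(a,w) \<notin> H"
    show "\<exists>T'. cert S T' (fH a)"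
    proof (cases "(a,w) = (y,u)")
      case True
      then have "fH a = z" using fH step.hyps(3) by simp
      then show ?thesis using certz by metis
    next
      case False
      then have "(a,w) \<in> T" using aw by blast
      then show ?thesis using lst aw(2) by blast
    qed
  qed
  show ?case using valid' card' zn zf od' cs' lst' by blast
qed

end

context ctx
begin

lemma fac2: "x \<in> Cols \<Longrightarrow> v < n \<Longrightarrow> (\<exists>!u. u < n \<and> col (v,u) = x) \<and> (\<exists>!u. u < n \<and> col (u,v) = x)"
proof -
  assume x: "x \<in> Cols" and v: "v < n"
  have "\<forall>x\<in>Cols. \<forall>v<n. (\<exists>!u. u < n \<and> col (v,u) = x) \<and> (\<exists>!u. u < n \<and> col (u,v) = x)"
    using fac unfolding one_factorization_def Cols_def .
  then have "\<forall>v<n. (\<exists>!u. u < n \<and> col (v,u) = x) \<and> (\<exists>!u. u < n \<and> col (u,v) = x)"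
    using x by (rule bspec)
  then have "v < n \<longrightarrow> (\<exists>!u. u < n \<and> col (v,u) = x) \<and> (\<exists>!u. u < n \<and> col (u,v) = x)"
    by (rule spec)
  then show ?thesis using v by (rule mp)
qed

lemma row_unique: "x \<in> Cols \<Longrightarrow> v < n \<Longrightarrow> \<exists>!u. u < n \<and> col (v,u) = x"
  using fac2 by (rule conjunct1)

lemma col_unique: "x \<in> Cols \<Longrightarrow> v < n \<Longrightarrow> \<exists>!u. u < n \<and> col (u,v) = x"
  using fac2 by (rule conjunct2)

lemma cert_valid: "cert S T u \<Longrightarrow> valid n k col T"
  using cert_inv by (rule conjunct1)
lemma cert_card: "cert S T u \<Longrightarrow> card T = card H"
  by (drule cert_inv, elim conjE, assumption)
lemma cert_un: "cert S T u \<Longrightarrow> u < n"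
  by (drule cert_inv, elim conjE, assumption)
lemma cert_uf: "cert S T u \<Longrightarrow> \<forall>v. (v,u) \<notin> T"
  by (drule cert_inv, elim conjE, assumption)
lemma cert_od: "cert S T u \<Longrightarrow> \<forall>y. (\<exists>w. (y,w) \<in> T) \<longleftrightarrow> (\<exists>w. (y,w) \<in> H)"
  by (drule cert_inv, elim conjE, assumption)
lemma cert_cs: "cert S T u \<Longrightarrow> col ` T \<subseteq> col ` H \<union> S"
  by (drule cert_inv, elim conjE, assumption)
lemma cert_lst: "cert S T u \<Longrightarrow> \<forall>y w. (y,w) \<in> T \<longrightarrow> (y,w) \<notin> H \<longrightarrow> (\<exists>T'. cert S T' (fH y))"
  by (drule cert_inv, elim conjE, assumption)

lemma key:
  assumes c: "cert S T u" and mM: "m \<in> Mset" and mS: "m \<notin> S" and yn: "y < n" and cy: "col (y,u) = m"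
  shows "(\<exists>j<k. y \<in> reach T j u) \<or> (y \<in> Dset \<and> (\<exists>T'. cert (insert m S) T' (fH y)))"
proof -
  have vT: "valid n k col T" and cT: "card T = card H" and un: "u < n" and uf: "\<forall>v. (v,u) \<notin> T"
    and od: "\<forall>y. (\<exists>w. (y,w) \<in> T) \<longleftrightarrow> (\<exists>w. (y,w) \<in> H)" and cs: "col ` T \<subseteq> col ` H \<union> S"
    and lst: "\<forall>y w. (y,w) \<in> T \<longrightarrow> (y,w) \<notin> H \<longrightarrow> (\<exists>T'. cert S T' (fH y))"
    using cert_valid[OF c] cert_card[OF c] cert_un[OF c] cert_uf[OF c] cert_od[OF c] cert_cs[OF c] cert_lst[OF c] by -
  have Tsub: "T \<subseteq> Kn_edges n" and Tinj: "inj_on col T" and Tf: "func T" and Tnc: "nocyc k T"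
    using vT unfolding valid_def by auto
  have Tfin: "finite T" using Tsub Kn_fin finite_subset by blast
  have mT: "m \<notin> col ` T" using cs mM mS unfolding Mset_def by blast
  have c': "cert (insert m S) T u" using cert_mono[OF c] by blast
  show ?thesis
  proof (cases "y \<in> Dset")
    case False
    then have ny: "\<forall>w. (y,w) \<notin> T" using od unfolding Dset_def by blast
    let ?T' = "insert (y,u) T"
    have v1: "?T' \<subseteq> Kn_edges n" using Tsub yn un unfolding Kn_edges_def by auto
    have v2: "inj_on col ?T'" using Tinj mT cy by (auto simp: inj_on_insert)
    have v3: "func ?T'" using func_insert[OF Tf uf ny] .
    have "(y,u) \<notin> T" using uf by blast
    then have card': "card ?T' = Suc (card H)" using Tfin cT by simp
    have "\<not> nocyc k ?T'"
    proof
      assume "nocyc k ?T'"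
      then have "valid n k col ?T'" unfolding valid_def using v1 v2 v3 by blast
      then have "card ?T' \<le> card H" by (rule Hmax)
      then show False using card' by simp
    qed
    then obtain l where l: "1 \<le> l" "l \<le> k" "has_dicycle ?T' l" unfolding nocyc_def by blast
    obtain j where "j < l" "y \<in> reach T j u" using cycle_reach[OF Tnc subset_refl l(3) l(1,2)] by blast
    then have "j < k \<and> y \<in> reach T j u" using l(2) by simp
    then show ?thesis by blast
  next
    case True
    then obtain w where yw: "(y,w) \<in> T" using od unfolding Dset_def by blast
    show ?thesis
    proof (cases "(y,w) \<in> H")
      case False
      then obtain T'' where "cert S T'' (fH y)" using lst yw by blast
      then have "cert (insert m S) T'' (fH y)" using cert_mono by blast
      then show ?thesis using True by blast
    next
      case Hw: True
      then have fy: "fH y = w" by (rule fH)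
      let ?T' = "insert (y,u) (T - {(y,w)})"
      show ?thesis
      proof (cases "nocyc k ?T'")
        case True
        have "cert (insert m S) ?T' w"
          using cert.step[OF c' yw Hw _ _ True] cy mT by simp
        then show ?thesis using fy \<open>y \<in> Dset\<close> by blast
      next
        case False
        then obtain l where l: "1 \<le> l" "l \<le> k" "has_dicycle ?T' l" unfolding nocyc_def by blast
        have "?T' \<subseteq> insert (y,u) T" by blast
        then obtain j where "j < l" "y \<in> reach T j u" using cycle_reach[OF Tnc _ l(3) l(1,2)] by blast
        then have "j < k \<and> y \<in> reach T j u" using l(2) by simp
    then show ?thesis by blast
      qed
    qed
  qed
qed

definition "Cset S = {u. \<exists>T. cert S T u}"
definition "Tc S u = (SOME T. cert S T u)"
definition "yy m u = (THE y. y < n \<and> col (y,u) = m)"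
definition "blocked S m u \<longleftrightarrow> (\<exists>j<k. yy m u \<in> reach (Tc S u) j u)"

lemma Cset_sub: "Cset S \<subseteq> {..<n}"
  unfolding Cset_def using cert_un by blast

lemma Cset_fin: "finite (Cset S)" using Cset_sub finite_subset by blast

lemma Iset_Cset: "Iset \<subseteq> Cset S"
  unfolding Cset_def using cert.base by blast

lemma Cset_mono: "S \<subseteq> S' \<Longrightarrow> Cset S \<subseteq> Cset S'"
  unfolding Cset_def using cert_mono by blast

lemma Tc: "u \<in> Cset S \<Longrightarrow> cert S (Tc S u) u"
  unfolding Cset_def Tc_def by (metis (mono_tags) mem_Collect_eq someI_ex)

lemma yy: "m \<in> Cols \<Longrightarrow> u < n \<Longrightarrow> yy m u < n \<and> col (yy m u, u) = m"
  unfolding yy_def using theI'[OF col_unique[of m u]] by simp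

lemma Mset_Cols: "Mset \<subseteq> Cols" unfolding Mset_def by blast

lemma per_u:
  assumes u: "u \<in> Cset S"
  shows "card {m \<in> Mset - S. blocked S m u} \<le> k"
proof -
  have cT: "cert S (Tc S u) u" using Tc[OF u] .
  have "func (Tc S u)" using cert_valid[OF cT] unfolding valid_def by blast
  note R = reach_card[OF this, of u k]
  have un: "u < n" using u Cset_sub by blast
  have inj: "inj_on (\<lambda>m. yy m u) {m \<in> Mset - S. blocked S m u}"
  proof (rule inj_onI)
    fix a b assume a: "a \<in> {m \<in> Mset - S. blocked S m u}" and b: "b \<in> {m \<in> Mset - S. blocked S m u}"
      and e: "yy a u = yy b u"
    have aC: "a \<in> Cols" using a Mset_Cols by blast
    have bC: "b \<in> Cols" using b Mset_Cols by blast
    have "col (yy a u, u) = a" using yy[OF aC un] by simp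
    moreover have "col (yy b u, u) = b" using yy[OF bC un] by simp
    ultimately show "a = b" using e by metis
  qed
  have im: "(\<lambda>m. yy m u) ` {m \<in> Mset - S. blocked S m u} \<subseteq> (\<Union>j<k. reach (Tc S u) j u)"
  proof
    fix y assume "y \<in> (\<lambda>m. yy m u) ` {m \<in> Mset - S. blocked S m u}"
    then obtain m where m: "blocked S m u" "y = yy m u" by blast
    then obtain j where "j < k" "yy m u \<in> reach (Tc S u) j u" unfolding blocked_def by blast
    then show "y \<in> (\<Union>j<k. reach (Tc S u) j u)" using m(2) by blast
  qed
  have "card {m \<in> Mset - S. blocked S m u} \<le> card (\<Union>j<k. reach (Tc S u) j u)"
    by (rule card_inj_on_le[OF inj im conjunct2[OF R]])
  then show ?thesis using conjunct1[OF R] by linarith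
qed

end

lemma card_filter_sum: "finite A \<Longrightarrow> card {x\<in>A. P x} = (\<Sum>x\<in>A. if P x then 1 else 0::nat)"
  by (simp add: sum.inter_filter[symmetric])

lemma ex1_eq: "\<exists>!x. P x \<Longrightarrow> P a \<Longrightarrow> P b \<Longrightarrow> a = b" by blast

context ctx
begin

lemma Cols_eq: "Cols = (\<lambda>u. col (0,u)) ` {..<n}"
proof
  show "Cols \<subseteq> (\<lambda>u. col (0,u)) ` {..<n}"
  proof
    fix x assume x: "x \<in> Cols"
    have n0: "0 < n" using n1 by simp
    have "\<exists>u. u < n \<and> col (0,u) = x" using row_unique[OF x n0] by (rule ex1_implies_ex)
    then obtain u where "u < n" "col (0,u) = x" by blast
    then show "x \<in> (\<lambda>u. col (0,u)) ` {..<n}" by auto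
  qed
  show "(\<lambda>u. col (0,u)) ` {..<n} \<subseteq> Cols"
    unfolding Cols_def Kn_edges_def using n1 by auto
qed

lemma Cols_inj: "inj_on (\<lambda>u. col (0,u)) {..<n}"
proof (rule inj_onI)
  fix a b assume a: "a \<in> {..<n}" and b: "b \<in> {..<n}" and e: "col (0,a) = col (0,b)"
  have x: "col (0,a) \<in> Cols" using a n1 unfolding Cols_def Kn_edges_def by auto
  have n0: "0 < n" using n1 by simp
  show "a = b" using row_unique[OF x n0] a b e by auto
qed

lemma card_Cols: "card Cols = n"
  using Cols_eq Cols_inj by (simp add: card_image)

lemma Cols_fin: "finite Cols" using Cols_eq by simp

lemma Mset_fin: "finite Mset" using Cols_fin Mset_Cols finite_subset by blast

lemma snd_inj: "inj_on snd H"
proof (rule inj_onI)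
  fix p q assume "p \<in> H" "q \<in> H" "snd p = snd q"
  then show "p = q" using H_func unfolding func_def by (metis prod.collapse)
qed

lemma cardH_le: "card H \<le> n"
proof -
  have "snd ` H \<subseteq> {..<n}" using H_sub unfolding Kn_edges_def by auto
  then have "card (snd ` H) \<le> n" using card_mono[of "{..<n}"] by fastforce
  then show ?thesis using snd_inj by (simp add: card_image)
qed

lemma card_Iset: "card Iset = n - card H"
proof -
  have "Iset = {..<n} - snd ` H" unfolding Iset_def by force
  moreover have "snd ` H \<subseteq> {..<n}" using H_sub unfolding Kn_edges_def by auto
  ultimately have "card Iset = n - card (snd ` H)" by (simp add: card_Diff_subset H_fin)
  then show ?thesis using snd_inj by (simp add: card_image)
qed

lemma card_Mset: "card Mset = n - card H"
proof -
  have sub: "col ` H \<subseteq> Cols" using H_sub unfolding Cols_def by blast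
  have "inj_on col H" using Hv unfolding valid_def by blast
  then have "card (col ` H) = card H" by (simp add: card_image)
  then show ?thesis unfolding Mset_def using card_Diff_subset[OF finite_imageI[OF H_fin] sub] card_Cols
    by simp
qed

lemma Iset_fin: "finite Iset" unfolding Iset_def by simp

lemma double:
  "(\<Sum>m\<in>Mset - S. card {u\<in>Cset S. blocked S m u}) \<le> k * card (Cset S)"
proof -
  have "(\<Sum>m\<in>Mset - S. card {u\<in>Cset S. blocked S m u})
      = (\<Sum>m\<in>Mset - S. \<Sum>u\<in>Cset S. if blocked S m u then 1 else 0)"
    by (rule sum.cong[OF refl], rule card_filter_sum[OF Cset_fin])
  also have "\<dots> = (\<Sum>u\<in>Cset S. \<Sum>m\<in>Mset - S. if blocked S m u then 1 else 0)"
    by (rule sum.swap)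
  also have "\<dots> = (\<Sum>u\<in>Cset S. card {m\<in>Mset - S. blocked S m u})"
    by (rule sum.cong[OF refl], rule card_filter_sum[symmetric], use Mset_fin in simp)
  also have "\<dots> \<le> (\<Sum>u\<in>Cset S. k)" by (rule sum_mono) (rule per_u)
  finally show ?thesis by (simp add: mult.commute)
qed

lemma pick:
  assumes ne: "Mset - S \<noteq> {}"
  shows "\<exists>m\<in>Mset - S. card {u\<in>Cset S. blocked S m u} * card (Mset - S) \<le> k * card (Cset S)"
proof (rule ccontr)
  assume "\<not> ?thesis"
  then have lt: "k * card (Cset S) < card {u\<in>Cset S. blocked S m u} * card (Mset - S)"
    if "m \<in> Mset - S" for m using that by (simp add: not_le)
  have fin: "finite (Mset - S)" using Mset_fin by simp
  have "(\<Sum>m\<in>Mset - S. k * card (Cset S)) < (\<Sum>m\<in>Mset - S. card {u\<in>Cset S. blocked S m u} * card (Mset - S))"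
    by (rule sum_strict_mono[OF fin ne lt])
  also have "\<dots> = (\<Sum>m\<in>Mset - S. card {u\<in>Cset S. blocked S m u}) * card (Mset - S)"
    by (simp add: sum_distrib_right)
  also have "\<dots> \<le> k * card (Cset S) * card (Mset - S)"
    using double by (rule mult_right_mono) simp
  finally show False by simp
qed

lemma growth:
  assumes m: "m \<in> Mset - S"
  shows "card Iset + (card (Cset S) - card {u\<in>Cset S. blocked S m u}) \<le> card (Cset (insert m S))"
proof -
  let ?G = "{u\<in>Cset S. \<not> blocked S m u}"
  have mM: "m \<in> Mset" and mS: "m \<notin> S" using m by auto
  have mC: "m \<in> Cols" using mM Mset_Cols by blast
  have good: "yy m u \<in> Dset \<and> fH (yy m u) \<in> Cset (insert m S)" if u: "u \<in> ?G" for u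
  proof -
    have uC: "u \<in> Cset S" and nb: "\<not> blocked S m u" using u by auto
    have un: "u < n" using uC Cset_sub by blast
    have y: "yy m u < n" "col (yy m u, u) = m" using yy[OF mC un] by auto
    have "(\<exists>j<k. yy m u \<in> reach (Tc S u) j u) \<or> (yy m u \<in> Dset \<and> (\<exists>T'. cert (insert m S) T' (fH (yy m u))))"
      by (rule key[OF Tc[OF uC] mM mS y(1) y(2)])
    moreover have "\<not> (\<exists>j<k. yy m u \<in> reach (Tc S u) j u)" using nb unfolding blocked_def .
    ultimately have "yy m u \<in> Dset \<and> (\<exists>T'. cert (insert m S) T' (fH (yy m u)))" by blast
    then show ?thesis unfolding Cset_def by simp
  qed
  let ?F = "(\<lambda>u. fH (yy m u)) ` ?G"
  have inj2: "\<And>a b c. (a,c) \<in> H \<Longrightarrow> (b,c) \<in> H \<Longrightarrow> a = b"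
    using H_func unfolding func_def by blast
  have inj: "inj_on (\<lambda>u. fH (yy m u)) ?G"
  proof (rule inj_onI)
    fix a b assume a: "a \<in> ?G" and b: "b \<in> ?G" and e: "fH (yy m a) = fH (yy m b)"
    have "(yy m a, fH (yy m a)) \<in> H" using fH_D good[OF a] by blast
    moreover have "(yy m b, fH (yy m b)) \<in> H" using fH_D good[OF b] by blast
    ultimately have yab: "yy m a = yy m b" using e inj2 by simp
    have an: "a < n" and bn: "b < n" using a b Cset_sub by auto
    have ya: "yy m a < n" "col (yy m a, a) = m" using yy[OF mC an] by auto
    have yb: "col (yy m b, b) = m" using yy[OF mC bn] by auto
    show "a = b" using ex1_eq[OF row_unique[OF mC ya(1)]] an bn ya(2) yb yab by simp
  qed
  have disj: "Iset \<inter> ?F = {}"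
  proof -
    have "x \<notin> Iset" if "x \<in> ?F" for x
    proof -
      obtain u where u: "u \<in> ?G" "x = fH (yy m u)" using \<open>x \<in> ?F\<close> by blast
      have "(yy m u, x) \<in> H" using fH_D good[OF u(1)] u(2) by blast
      then show ?thesis unfolding Iset_def by blast
    qed
    then show ?thesis by blast
  qed
  have sub: "Iset \<union> ?F \<subseteq> Cset (insert m S)" using Iset_Cset good by blast
  have Ffin: "finite ?F" using Cset_fin by simp
  have c1: "card (Iset \<union> ?F) = card Iset + card ?F"
    using card_Un_disjoint[OF Iset_fin Ffin disj] .
  have c2: "card ?F = card ?G" using inj by (simp add: card_image)
  have e3: "?G = Cset S - {u\<in>Cset S. blocked S m u}" by blast
  have c4: "card (Cset S - {u\<in>Cset S. blocked S m u}) = card (Cset S) - card {u\<in>Cset S. blocked S m u}"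
    by (rule card_Diff_subset) (use Cset_fin in auto)
  have "card (Iset \<union> ?F) = card Iset + (card (Cset S) - card {u\<in>Cset S. blocked S m u})"
    using c1 c2 e3 c4 by simp
  moreover have "card (Iset \<union> ?F) \<le> card (Cset (insert m S))" using card_mono[OF Cset_fin sub] .
  ultimately show ?thesis by simp
qed

end

context ctx
begin

lemma grow:
  assumes S: "S \<subseteq> Mset" and lt: "2 * card S < n - card H"
  shows "(n - card H) * (n - card H) \<le> 4 * k * n \<or>
         (\<exists>m\<in>Mset - S. 2 * card (Cset S) + (n - card H) \<le> 2 * card (Cset (insert m S)))"
proof (cases "(n - card H) * (n - card H) \<le> 4 * k * n")
  case True then show ?thesis by blast
next
  case False
  define d where "d = n - card H"
  define c where "c = card (Cset S)"
  define r where "r = card (Mset - S)"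
  have Sfin: "finite S" using S Mset_fin finite_subset by blast
  have r: "r = d - card S" unfolding r_def d_def using card_Diff_subset[OF Sfin S] card_Mset by simp
  have r2: "d + 1 \<le> 2 * r" using r lt unfolding d_def by linarith
  have ne: "Mset - S \<noteq> {}"
  proof
    assume "Mset - S = {}"
    then have "r = 0" unfolding r_def by (metis card.empty)
    then show False using r2 by simp
  qed
  obtain m where m: "m \<in> Mset - S" and mb: "card {u\<in>Cset S. blocked S m u} * r \<le> k * c"
    using pick[OF ne] unfolding r_def c_def by blast
  define b where "b = card {u\<in>Cset S. blocked S m u}"
  have bc: "b \<le> c" unfolding b_def c_def by (rule card_mono[OF Cset_fin]) blast
  have cn: "c \<le> n" unfolding c_def using card_mono[OF _ Cset_sub] by simp
  have "4 * k * c \<le> 4 * k * n" using cn by (rule mult_le_mono2)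
  moreover have "4 * k * n < d * d" using False unfolding d_def by simp
  ultimately have kc: "4 * k * c < d * d" by linarith
  have br: "b * r \<le> k * c" using mb unfolding b_def .
  have "b * (d + 1) \<le> b * (2 * r)" using r2 by (rule mult_le_mono2)
  also have "\<dots> = 2 * (b * r)" by simp
  also have "\<dots> \<le> 2 * (k * c)" using br by simp
  finally have b1: "2 * (b * (d + 1)) \<le> 4 * k * c" by simp
  have b2: "2 * b < d"
  proof (rule ccontr)
    assume "\<not> 2 * b < d"
    then have "d \<le> 2 * b" by simp
    then have "d * (d + 1) \<le> (2 * b) * (d + 1)" by (rule mult_le_mono1)
    then have "d * (d + 1) < d * d" using b1 kc by simp
    then show False by simp
  qed
  have g: "card Iset + (c - b) \<le> card (Cset (insert m S))"
    using growth[OF m] unfolding c_def b_def .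
  have "card Iset = d" unfolding d_def by (rule card_Iset)
  then have "2 * c + d \<le> 2 * card (Cset (insert m S))" using g bc b2 by linarith
  then show ?thesis using m unfolding c_def d_def by blast
qed

lemma chain:
  "2 * j \<le> n - card H \<Longrightarrow> (n - card H) * (n - card H) \<le> 4 * k * n \<or>
     (\<exists>S\<subseteq>Mset. card S = j \<and> (j + 1) * (n - card H) \<le> 2 * card (Cset S))"
proof (induction j)
  case 0
  have "card Iset \<le> card (Cset {})" using card_mono[OF Cset_fin Iset_Cset] .
  moreover have "(0 + 1) * (n - card H) = n - card H" by (simp only: add_0 mult_1)
  ultimately have "(0 + 1) * (n - card H) \<le> 2 * card (Cset {})" using card_Iset by linarith
  moreover have "{} \<subseteq> Mset" "card ({}::'c set) = 0" by simp_all
  ultimately show ?case by blast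
next
  case (Suc j)
  have "2 * j \<le> n - card H" using Suc.prems unfolding mult_Suc_right by linarith
  from Suc.IH[OF this] show ?case
  proof
    assume "(n - card H) * (n - card H) \<le> 4 * k * n" then show ?case by blast
  next
    assume "\<exists>S\<subseteq>Mset. card S = j \<and> (j + 1) * (n - card H) \<le> 2 * card (Cset S)"
    then obtain S where S: "S \<subseteq> Mset" "card S = j" "(j + 1) * (n - card H) \<le> 2 * card (Cset S)" by blast
    have "2 * card S < n - card H" using S(2) Suc.prems unfolding mult_Suc_right by linarith
    from grow[OF S(1) this] show ?case
    proof
      assume "(n - card H) * (n - card H) \<le> 4 * k * n" then show ?case by blast
    next
      assume "\<exists>m\<in>Mset - S. 2 * card (Cset S) + (n - card H) \<le> 2 * card (Cset (insert m S))"
      then obtain m where m: "m \<in> Mset - S" "2 * card (Cset S) + (n - card H) \<le> 2 * card (Cset (insert m S))"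
        by blast
      have Sfin: "finite S" using S(1) Mset_fin finite_subset by blast
      have "insert m S \<subseteq> Mset" using m(1) S(1) by blast
      moreover have "card (insert m S) = Suc j"
        using card_insert_disjoint[OF Sfin, of m] m(1) S(2) by blast
      moreover have "(Suc j + 1) * (n - card H) \<le> 2 * card (Cset (insert m S))"
      proof -
        have "(Suc j + 1) * (n - card H) = (n - card H) + (j + 1) * (n - card H)"
          by (simp only: add_Suc mult_Suc)
        then show ?thesis using S(3) m(2) by linarith
      qed
      ultimately show ?case by blast
    qed
  qed
qed

lemma final_d: "(n - card H) * (n - card H) \<le> 4 * k * n"
proof -
  define d where "d = n - card H"
  have "2 * (d div 2) \<le> d" by simp
  from chain[of "d div 2", folded d_def, OF this] have "d * d \<le> 4 * k * n"
  proof
    assume "d * d \<le> 4 * k * n" then show ?thesis .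
  next
    assume "\<exists>S\<subseteq>Mset. card S = d div 2 \<and> (d div 2 + 1) * d \<le> 2 * card (Cset S)"
    then obtain S where S: "(d div 2 + 1) * d \<le> 2 * card (Cset S)" by blast
    have "card (Cset S) \<le> n" using card_mono[OF _ Cset_sub] by simp
    then have a: "(d div 2 + 1) * d \<le> 2 * n" using S by linarith
    have "d \<le> 2 * (d div 2 + 1)" by simp
    then have "d * d \<le> 2 * (d div 2 + 1) * d" by (rule mult_le_mono1)
    also have "\<dots> \<le> 4 * n" using a by simp
    also have "\<dots> \<le> 4 * k * n" using k1 by simp
    finally show ?thesis .
  qed
  then show ?thesis unfolding d_def .
qed

end

lemma k_bound_nat: "j + 2 \<le> 9 * 6 ^ j"
proof (induction j)
  case 0 then show ?case by simp
next
  case (Suc j) then show ?case by simp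
qed

lemma real_bound:
  fixes n k d :: nat
  assumes n1: "1 \<le> n" and k2: "2 \<le> k" and dn: "d \<le> n" and dd: "d * d \<le> 4 * k * n"
  shows "real d \<le> 6 * real n powr ((real k - 1) / real k)"
proof -
  define x where "x = real n powr (1 / real k)"
  have np: "0 < real n" using n1 by simp
  have xpos: "0 < x" unfolding x_def using np by simp
  have kp: "0 < real k" using k2 by simp
  have xk: "x ^ k = real n"
  proof -
    have "x ^ k = x powr real k" using powr_realpow[OF xpos] by simp
    also have "\<dots> = real n powr (1 / real k * real k)" unfolding x_def by (rule powr_powr)
    also have "\<dots> = real n" using kp np by simp
    finally show ?thesis .
  qed
  have xk1: "real n powr ((real k - 1) / real k) = x ^ (k - 1)"
  proof -
    have "x ^ (k - 1) = x powr real (k - 1)" using powr_realpow[OF xpos] by simp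
    also have "\<dots> = real n powr (1 / real k * real (k - 1))" unfolding x_def by (rule powr_powr)
    also have "1 / real k * real (k - 1) = (real k - 1) / real k" using k2 by (simp add: of_nat_diff)
    finally show ?thesis by simp
  qed
  have xsplit: "x ^ k = x * x ^ (k - 1)"
  proof -
    have "k = Suc (k - 1)" using k2 by simp
    then show ?thesis by (metis power_Suc)
  qed
  show ?thesis
  proof (cases "x \<le> 6")
    case True
    have "real n = x * x ^ (k - 1)" using xk xsplit by simp
    also have "\<dots> \<le> 6 * x ^ (k - 1)" using True xpos by (simp add: mult_right_mono)
    finally show ?thesis using dn xk1 by simp
  next
    case False
    then have x6: "6 < x" by simp
    have "real k \<le> 9 * 6 ^ (k - 2)"
    proof -
      have "(k - 2) + 2 \<le> 9 * 6 ^ (k - 2)" by (rule k_bound_nat)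
      then have "k \<le> 9 * 6 ^ (k - 2)" using k2 by simp
      then show ?thesis by (metis of_nat_le_iff of_nat_mult of_nat_numeral of_nat_power)
    qed
    also have "(9::real) * 6 ^ (k - 2) \<le> 9 * x ^ (k - 2)"
      using x6 by (simp add: power_mono)
    finally have kx: "real k \<le> 9 * x ^ (k - 2)" .
    have ee: "x ^ (k - 2) * x ^ k = x ^ (k - 1) * x ^ (k - 1)"
    proof -
      have "(k - 2) + k = (k - 1) + (k - 1)" using k2 by simp
      then show ?thesis by (metis power_add)
    qed
    have "real d * real d \<le> 4 * real k * real n"
    proof -
      have "real (d * d) \<le> real (4 * k * n)" using dd by (simp only: of_nat_le_iff)
      then show ?thesis by simp
    qed
    also have "\<dots> = 4 * real k * x ^ k" using xk by simp
    also have "\<dots> \<le> 4 * (9 * x ^ (k - 2)) * x ^ k"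
      using kx xpos by (simp add: mult_right_mono)
    also have "\<dots> = 36 * (x ^ (k - 2) * x ^ k)" by simp
    also have "\<dots> = (6 * x ^ (k - 1)) ^ 2" using ee by (simp add: power2_eq_square)
    finally have "(real d) ^ 2 \<le> (6 * x ^ (k - 1)) ^ 2" by (simp add: power2_eq_square)
    then have "real d \<le> 6 * x ^ (k - 1)"
      by (rule power2_le_imp_le) (use xpos in simp)
    then show ?thesis using xk1 by simp
  qed
qed

lemma valid_empty: "valid n k col {}"
proof -
  have "\<not> has_dicycle {} l" if "1 \<le> l" for l
  proof
    assume "has_dicycle {} l"
    then obtain vs where "length vs = l" "\<forall>i<l. (vs!i, vs!((i+1) mod l)) \<in> ({}::(nat\<times>nat) set)"
      unfolding has_dicycle_def by blast
    then show False using that by (metis empty_iff less_le_trans zero_less_one)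
  qed
  then show ?thesis unfolding valid_def func_def nocyc_def by auto
qed

lemma valid_card: "valid n k col T \<Longrightarrow> card T < n * n + 1"
proof -
  assume "valid n k col T"
  then have "T \<subseteq> Kn_edges n" unfolding valid_def by simp
  then have "card T \<le> card (Kn_edges n)" by (rule card_mono[rotated]) (simp add: Kn_edges_def)
  also have "card (Kn_edges n) = n * n" unfolding Kn_edges_def by (simp add: card_cartesian_product)
  finally show ?thesis by simp
qed

theorem mainTheorem4:
  fixes n k :: nat and col :: "nat \<times> nat \<Rightarrow> 'c"
  assumes "n \<ge> 1" and "k \<ge> 2"
    and "one_factorization n col"
  shows "\<exists>H. H \<subseteq> Kn_edges n \<and> rainbow col H \<and> max_in_out_deg_le_one H \<and>
             real (card H) \<ge> real n - 6 * real n powr ((real k - 1) / real k) \<and>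
             (\<forall>l. 1 \<le> l \<and> l \<le> k \<longrightarrow> \<not> has_dicycle H l)"
proof -
  obtain H where Hv: "valid n k col H" and Hmax: "\<forall>T. valid n k col T \<longrightarrow> card T \<le> card H"
    using Lattices_Big.ex_has_greatest_nat[of "valid n k col" "{}" card "n * n + 1"]
      valid_empty valid_card by blast
  interpret ctx n k col H
    by (unfold_locales) (use assms Hv Hmax in auto)
  have dd: "(n - card H) * (n - card H) \<le> 4 * k * n" by (rule final_d)
  have cH: "card H \<le> n" by (rule cardH_le)
  have rb: "real (n - card H) \<le> 6 * real n powr ((real k - 1) / real k)"
    using real_bound[OF assms(1) assms(2) _ dd] diff_le_self by blast
  have "real (n - card H) = real n - real (card H)" by (rule of_nat_diff[OF cH])
  then have c: "real (card H) \<ge> real n - 6 * real n powr ((real k - 1) / real k)" using rb by linarith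
  have "H \<subseteq> Kn_edges n" using H_sub .
  moreover have "rainbow col H" using Hv unfolding valid_def rainbow_def by simp
  moreover have "max_in_out_deg_le_one H" using func_maxdeg[OF H_fin H_func] .
  moreover have "\<forall>l. 1 \<le> l \<and> l \<le> k \<longrightarrow> \<not> has_dicycle H l" using Hv unfolding valid_def nocyc_def by simp
  ultimately show ?thesis using c by blast
qed

end
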